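(* For $n\ge0$ let $V_\Delta(n)=V_3(\alpha(n))$, where $\alpha(n)=x_1x_2x_1x_2\cdots\in\mathcal{B}_3$ is the alternating product of $n$ factors starting with $x_1$ ($\alpha(0)=1$). Then $V_\Delta(2k+1)=(s^3-s)V_\Delta(2k)+s^4V_\Delta(2k-1)$ for $k\ge1$; $V_\Delta(6k+4)=(s^3-s)V_\Delta(6k+3)+s^4V_\Delta(6k+2)$ for $k\ge0$; $V_\Delta(6k+2)=(s^3-s)V_\Delta(6k+1)+(s^7-s^5)V_\Delta(6k-1)+s^8V_\Delta(6k-2)$ for $k\ge1$; $V_\Delta(6k)=(s^3-s)\big[V_\Delta(6k-1)+s^4V_\Delta(6k-3)+s^8V_\Delta(6k-5)\big]+s^{12}V_\Delta(6k-6)$ for $k\ge1$.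
   Context: $\mathcal{B}_3$ is the 3-strand braid group with Artin generators $x_1,x_2$; $V_3(\beta)$ is the Jones polynomial of the closure of $\beta$, normalized by $V(\text{unknot})=1$ and $q^{-1}V_{L_+}-qV_{L_-}=(q^{1/2}-q^{-1/2})V_{L_0}$, written in $s=q^{-1/2}$. Conventions: closures of $\alpha x_i^{e+2}\gamma$, $\alpha x_i^{e+1}\gamma$, $\alpha x_i^{e}\gamma$ play the roles of $L_-,L_0,L_+$ (e.g. the closure of $x_1^2\in\mathcal B_2$ has Jones polynomial $-s-s^5$). *)

theory Defs
  imports "HOL-Computational_Algebra.Formal_Laurent_Series"
begin

text \<open>Artin generators of the 3-strand braid group; a braid word is a list of
  letters (generator, exponent sign), True meaning exponent +1, False meaning -1.\<close>

datatype brd_gen = X1 | X2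

type_synonym brd_word = "(brd_gen \<times> bool) list"

fun gpos :: "brd_gen \<Rightarrow> nat" where
  "gpos X1 = 1" | "gpos X2 = 2"

text \<open>Closed-braid diagram of a word after choosing, at each crossing, either the
  vertical smoothing (state False) or the horizontal cup-cap smoothing (state True).\<close>

definition brd_vertices :: "brd_word \<Rightarrow> (nat \<times> nat) set" where
  "brd_vertices w = {0..length w} \<times> {1,2,3}"

definition brd_edges :: "brd_word \<Rightarrow> bool list \<Rightarrow> ((nat \<times> nat) \<times> (nat \<times> nat)) set" where
  "brd_edges w st =
     {((j,p),(Suc j,p)) | j p. j < length w \<and> p \<in> {1,2,3} \<and>
         \<not> (st ! j \<and> p \<in> {gpos (fst (w ! j)), Suc (gpos (fst (w ! j)))})}
   \<union> {((j,i),(j,Suc i)) | j i. j < length w \<and> st ! j \<and> i = gpos (fst (w ! j))}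
   \<union> {((Suc j,i),(Suc j,Suc i)) | j i. j < length w \<and> st ! j \<and> i = gpos (fst (w ! j))}
   \<union> {((length w,p),(0,p)) | p. p \<in> {1,2,3}}"

definition brd_loops :: "brd_word \<Rightarrow> bool list \<Rightarrow> nat" where
  "brd_loops w st = card (brd_vertices w // ((brd_edges w st \<union> (brd_edges w st)\<inverse>)\<^sup>*))"

text \<open>Kauffman-bracket state sum, already multiplied by the writhe normalisation
  and rewritten in s = A^2 = q^(-1/2) (so that the closure of x_1^2 in B_2 has
  Jones polynomial -s - s^5, as in the stated conventions).  A letter x_i
  contributes -s (vertical) / -s^2 (cup-cap); x_i^(-1) contributes
  -s^(-1) / -s^(-2); every loop beyond the first contributes -(s + s^(-1)).\<close>

definition brd_coef :: "brd_gen \<times> bool \<Rightarrow> bool \<Rightarrow> int fls" where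
  "brd_coef l e =
     (if snd l then (if e then - (fls_X ^ 2) else - fls_X)
      else (if e then - (fls_X_inv ^ 2) else - fls_X_inv))"

definition loop_val :: "int fls" where
  "loop_val = - (fls_X + fls_X_inv)"

text \<open>Jones polynomial V_3 of the closure of a 3-braid word, as a Laurent
  polynomial in s = q^(-1/2) (s is fls_X).\<close>
definition V3 :: "brd_word \<Rightarrow> int fls" where
  "V3 w = (\<Sum>st \<in> {st :: bool list. length st = length w}.
            (\<Prod>j < length w. brd_coef (w ! j) (st ! j)) * loop_val ^ (brd_loops w st - 1))"

definition alpha :: "nat \<Rightarrow> brd_word" where
  "alpha n = map (\<lambda>j. (if even j then X1 else X2, True)) [0..<n]"

definition V_Delta :: "nat \<Rightarrow> int fls" where
  "V_Delta n = V3 (alpha n)"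

end

theory Submission
  imports Defs
begin


lemma rt_add:
  assumes "sym S"
  shows "(S \<union> {(a,b),(b,a)})\<^sup>* = {(x,y). (x,y)\<in>S\<^sup>* \<or> ((x,a)\<in>S\<^sup>* \<and> (b,y)\<in>S\<^sup>*) \<or> ((x,b)\<in>S\<^sup>* \<and> (a,y)\<in>S\<^sup>*)}"
proof -
  have sy: "sym (S\<^sup>*)" using assms by (simp add: sym_rtrancl)
  have e: "S \<union> {(a,b),(b,a)} = insert (a,b) (insert (b,a) S)" by auto
  show ?thesis unfolding e rtrancl_insert
    using sy by (auto simp: sym_def intro: rtrancl_trans)
qed

lemma rt_outside:
  assumes "S \<subseteq> V \<times> V" "x \<notin> V"
  shows "((x,y) \<in> S\<^sup>*) = (x = y)" "((y,x) \<in> S\<^sup>*) = (x = y)"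
proof -
  show "((x,y) \<in> S\<^sup>*) = (x = y)"
  proof
    assume "(x,y) \<in> S\<^sup>*" then show "x = y"
      by (cases rule: converse_rtranclE) (use assms in auto)
  qed auto
  show "((y,x) \<in> S\<^sup>*) = (x = y)"
  proof
    assume "(y,x) \<in> S\<^sup>*" then show "x = y"
      by (cases rule: rtranclE) (use assms in auto)
  qed auto
qed

lemma finite_quot: "finite V \<Longrightarrow> finite (V // R)"
  unfolding quotient_def by auto

lemma card_quot_insert_vertex:
  assumes "finite V" "S \<subseteq> V \<times> V" "v \<notin> V"
  shows "card (insert v V // S\<^sup>*) = Suc (card (V // S\<^sup>*))"
proof -
  have cv: "S\<^sup>* `` {v} = {v}" using rt_outside[OF assms(2,3)] by auto
  have q: "insert v V // S\<^sup>* = insert {v} (V // S\<^sup>*)"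
    unfolding quotient_def using cv by auto
  have "{v} \<notin> V // S\<^sup>*"
  proof
    assume "{v} \<in> V // S\<^sup>*"
    then obtain x where "x \<in> V" "{v} = S\<^sup>* `` {x}" unfolding quotient_def by auto
    then have "x \<in> {v}" by auto
    with \<open>x \<in> V\<close> assms(3) show False by auto
  qed
  then show ?thesis unfolding q using finite_quot[OF assms(1)] by simp
qed

lemma card_quot_add_edge:
  assumes fin: "finite V" and SV: "S \<subseteq> V \<times> V" and sy: "sym S" and aV: "a \<in> V" and bV: "b \<in> V"
    and nab: "(a,b) \<notin> S\<^sup>*"
  shows "card (V // S\<^sup>*) = Suc (card (V // (S \<union> {(a,b),(b,a)})\<^sup>*))"
proof -
  define R where "R = S\<^sup>*"
  have eq: "equiv UNIV R" unfolding R_def using sy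
    by (simp add: equiv_def refl_rtrancl sym_rtrancl trans_rtrancl)
  have symR: "sym R" unfolding R_def using sy by (simp add: sym_rtrancl)
  have trR: "trans R" unfolding R_def by (simp add: trans_rtrancl)
  define A where "A = R `` {a}"
  define B where "B = R `` {b}"
  have cls: "(S \<union> {(a,b),(b,a)})\<^sup>* `` {x} = (if (x,a) \<in> R \<or> (x,b) \<in> R then A \<union> B else R `` {x})" for x
  proof -
    have "(S \<union> {(a,b),(b,a)})\<^sup>* `` {x} = {y. (x,y)\<in>R \<or> ((x,a)\<in>R \<and> (b,y)\<in>R) \<or> ((x,b)\<in>R \<and> (a,y)\<in>R)}"
      unfolding rt_add[OF sy] R_def by auto
    also have "\<dots> = (if (x,a) \<in> R \<or> (x,b) \<in> R then A \<union> B else R `` {x})"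
      unfolding A_def B_def using symR trR
      by (auto simp: sym_def dest: transD)
    finally show ?thesis .
  qed
  have ceq: "(R``{x} \<in> {A,B}) = ((x,a) \<in> R \<or> (x,b) \<in> R)" for x
    unfolding A_def B_def using eq_equiv_class_iff[OF eq] by auto
  have AB: "A \<noteq> B" unfolding A_def B_def using eq_equiv_class_iff[OF eq] nab R_def by auto
  have Aq: "A \<in> V // R" "B \<in> V // R" unfolding A_def B_def quotient_def using aV bV by auto
  have q1: "V // R = insert A (insert B (V // R - {A,B}))" using Aq by auto
  have q2: "V // (S \<union> {(a,b),(b,a)})\<^sup>* = insert (A \<union> B) (V // R - {A,B})"
  proof -
    have "V // (S \<union> {(a,b),(b,a)})\<^sup>* = (\<lambda>x. (S \<union> {(a,b),(b,a)})\<^sup>* `` {x}) ` V"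
      unfolding quotient_def by auto
    also have "\<dots> = insert (A \<union> B) (V // R - {A,B})"
    proof (rule set_eqI, rule iffI)
      fix C assume "C \<in> (\<lambda>x. (S \<union> {(a,b),(b,a)})\<^sup>* `` {x}) ` V"
      then obtain x where x: "x \<in> V" "C = (S \<union> {(a,b),(b,a)})\<^sup>* `` {x}" by auto
      show "C \<in> insert (A \<union> B) (V // R - {A,B})"
        using x cls[of x] ceq[of x] unfolding quotient_def by (auto split: if_splits)
    next
      fix C assume "C \<in> insert (A \<union> B) (V // R - {A,B})"
      then show "C \<in> (\<lambda>x. (S \<union> {(a,b),(b,a)})\<^sup>* `` {x}) ` V"
      proof
        assume "C = A \<union> B" then show ?thesis using cls[of a] aV eq unfolding R_def
          by (auto simp: equiv_def refl_on_def intro!: image_eqI[where x=a])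
      next
        assume "C \<in> V // R - {A,B}"
        then obtain x where x: "x \<in> V" "C = R``{x}" "R``{x} \<notin> {A,B}" unfolding quotient_def by auto
        then show ?thesis using cls[of x] ceq[of x] by (auto intro!: image_eqI[where x=x])
      qed
    qed
    finally show ?thesis .
  qed
  have ABn: "A \<union> B \<notin> V // R - {A,B}"
  proof
    assume "A \<union> B \<in> V // R - {A,B}"
    then obtain x where x: "x \<in> V" "A \<union> B = R``{x}" "R``{x} \<noteq> A" unfolding quotient_def by auto
    have "a \<in> A" unfolding A_def R_def by auto
    then have "(x,a) \<in> R" using x by auto
    then have "R``{x} = A" unfolding A_def using eq_equiv_class_iff[OF eq] by auto
    with x show False by auto
  qed
  have fin2: "finite (V // R - {A,B})" using finite_quot[OF fin] by auto
  have "card (V // R) = Suc (Suc (card (V // R - {A,B})))"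
    by (subst q1) (use fin2 AB in auto)
  moreover have "card (V // (S \<union> {(a,b),(b,a)})\<^sup>*) = Suc (card (V // R - {A,B}))"
    by (subst q2) (use fin2 ABn in auto)
  ultimately show ?thesis unfolding R_def by simp
qed




definition rep :: "'v set \<Rightarrow> ('v \<times> 'v) set \<Rightarrow> ('v \<Rightarrow> nat) \<Rightarrow> bool" where
  "rep P R L \<longleftrightarrow> (\<forall>x\<in>P. \<forall>y\<in>P. ((x,y) \<in> R) = (L x = L y))"

fun addE :: "('v \<times> 'v) list \<Rightarrow> ('v \<Rightarrow> nat) \<Rightarrow> ('v \<Rightarrow> nat) \<times> nat" where
  "addE [] L = (L, 0)"
| "addE ((a,b)#es) L = (if L a = L b then addE es L
      else (let r = addE es (\<lambda>z. if L z = L b then L a else L z) in (fst r, Suc (snd r))))"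

lemma addE_lemma:
  assumes "finite V" "S \<subseteq> V \<times> V" "sym S" "P \<subseteq> V" "set es \<subseteq> P \<times> P" "rep P (S\<^sup>*) L"
  shows "rep P ((S \<union> set es \<union> (set es)\<inverse>)\<^sup>*) (fst (addE es L)) \<and>
         card (V // S\<^sup>*) = card (V // (S \<union> set es \<union> (set es)\<inverse>)\<^sup>*) + snd (addE es L)"
  using assms
proof (induction es arbitrary: S L)
  case Nil then show ?case by simp
next
  case (Cons e es)
  obtain a b where e: "e = (a,b)" by (cases e)
  define S1 where "S1 = S \<union> {(a,b),(b,a)}"
  have aP: "a \<in> P" "b \<in> P" using Cons.prems e by auto
  have S1: "S \<union> set (e#es) \<union> (set (e#es))\<inverse> = S1 \<union> set es \<union> (set es)\<inverse>"
    unfolding S1_def e by auto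
  have S1V: "S1 \<subseteq> V \<times> V" using Cons.prems aP unfolding S1_def by auto
  have S1s: "sym S1" using Cons.prems(3) unfolding S1_def by (auto simp: sym_def)
  have es: "set es \<subseteq> P \<times> P" using Cons.prems by auto
  have symR: "sym (S\<^sup>*)" using Cons.prems(3) by (simp add: sym_rtrancl)
  show ?case
  proof (cases "L a = L b")
    case True
    then have ab: "(a,b) \<in> S\<^sup>*" using Cons.prems(6) aP unfolding rep_def by auto
    have "S1\<^sup>* = S\<^sup>*" unfolding S1_def rt_add[OF Cons.prems(3)]
      using ab symR unfolding sym_def by (auto intro: rtrancl_trans) (meson rtrancl_trans)
    then show ?thesis using Cons.IH[OF Cons.prems(1) S1V S1s Cons.prems(4) es] Cons.prems(6) True e S1
      by simp
  next
    case False
    define L' where "L' = (\<lambda>z. if L z = L b then L a else L z)"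
    have nab: "(a,b) \<notin> S\<^sup>*" using Cons.prems(6) aP False unfolding rep_def by auto
    have rep1: "rep P (S1\<^sup>*) L'"
      unfolding rep_def S1_def rt_add[OF Cons.prems(3)] L'_def
      using Cons.prems(6) aP False unfolding rep_def by auto
    have c1: "card (V // S\<^sup>*) = Suc (card (V // S1\<^sup>*))" unfolding S1_def
      by (rule card_quot_add_edge) (use Cons.prems aP nab in auto)
    have IH: "rep P ((S1 \<union> set es \<union> (set es)\<inverse>)\<^sup>*) (fst (addE es L')) \<and>
         card (V // S1\<^sup>*) = card (V // (S1 \<union> set es \<union> (set es)\<inverse>)\<^sup>*) + snd (addE es L')"
      by (rule Cons.IH[OF Cons.prems(1) S1V S1s Cons.prems(4) es rep1])
    show ?thesis using IH c1 False e S1 unfolding L'_def by (simp add: Let_def)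
  qed
qed




datatype tl = TI | T1 | T2 | T12 | T21

fun tmul :: "tl \<Rightarrow> brd_gen \<Rightarrow> tl \<times> nat" where
  "tmul TI X1 = (T1, 0)" | "tmul TI X2 = (T2, 0)"
| "tmul T1 X1 = (T1, 1)" | "tmul T1 X2 = (T12, 0)"
| "tmul T2 X1 = (T21, 0)" | "tmul T2 X2 = (T2, 1)"
| "tmul T12 X1 = (T1, 0)" | "tmul T12 X2 = (T12, 1)"
| "tmul T21 X1 = (T21, 1)" | "tmul T21 X2 = (T2, 0)"

fun tcl :: "tl \<Rightarrow> nat" where
  "tcl TI = 3" | "tcl T1 = 2" | "tcl T2 = 2" | "tcl T12 = 1" | "tcl T21 = 1"

fun sel3 :: "nat \<times> nat \<times> nat \<Rightarrow> nat \<Rightarrow> nat" where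
  "sel3 (a,b,c) p = (if p = 1 then a else if p = 2 then b else c)"

fun ttop :: "tl \<Rightarrow> nat \<times> nat \<times> nat" where
  "ttop TI = (1,2,3)" | "ttop T1 = (2,2,3)" | "ttop T2 = (1,3,3)" | "ttop T12 = (3,2,2)" | "ttop T21 = (1,1,3)"
fun tbot :: "tl \<Rightarrow> nat \<times> nat \<times> nat" where
  "tbot TI = (1,2,3)" | "tbot T1 = (1,1,3)" | "tbot T2 = (1,2,2)" | "tbot T12 = (1,1,3)" | "tbot T21 = (3,2,2)"

definition lab :: "tl \<Rightarrow> nat \<Rightarrow> nat \<times> nat \<Rightarrow> nat" where
  "lab D n x = (if fst x = n then sel3 (ttop D) (snd x) else sel3 (tbot D) (snd x))"

fun gq :: "brd_gen \<Rightarrow> nat" where "gq X1 = 3" | "gq X2 = 1"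

definition layerL :: "brd_word \<Rightarrow> bool list \<Rightarrow> nat \<Rightarrow> ((nat \<times> nat) \<times> (nat \<times> nat)) list" where
  "layerL w st j = (let g = fst (w ! j) in
     if st ! j then [((j, gpos g), (j, Suc (gpos g))), ((Suc j, gpos g), (Suc j, Suc (gpos g))), ((j, gq g), (Suc j, gq g))]
     else [((j,1),(Suc j,1)), ((j,2),(Suc j,2)), ((j,3),(Suc j,3))])"

definition pedges :: "brd_word \<Rightarrow> bool list \<Rightarrow> nat \<Rightarrow> ((nat \<times> nat) \<times> (nat \<times> nat)) set" where
  "pedges w st n = (\<Union>j<n. set (layerL w st j))"

definition clos :: "nat \<Rightarrow> ((nat \<times> nat) \<times> (nat \<times> nat)) list" where
  "clos n = [((n,1),(0,1)), ((n,2),(0,2)), ((n,3),(0,3))]"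

definition Vn :: "nat \<Rightarrow> (nat \<times> nat) set" where "Vn n = {0..n} \<times> {1,2,3}"
definition Bn :: "nat \<Rightarrow> (nat \<times> nat) set" where "Bn n = {(0,1),(0,2),(0,3),(n,1),(n,2),(n,3)}"

definition Sy :: "('a \<times> 'a) set \<Rightarrow> ('a \<times> 'a) set" where "Sy E = E \<union> E\<inverse>"

fun dstate :: "brd_word \<Rightarrow> bool list \<Rightarrow> nat \<Rightarrow> tl \<times> nat" where
  "dstate w st 0 = (TI, 0)"
| "dstate w st (Suc n) = (let (D,m) = dstate w st n in
     if st ! n then (let (D',k) = tmul D (fst (w ! n)) in (D', m + k)) else (D, m))"

definition Lj :: "brd_word \<Rightarrow> bool list \<Rightarrow> nat \<Rightarrow> ((nat \<times> nat) \<times> (nat \<times> nat)) set" where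
  "Lj w st j = {((j,p),(Suc j,p)) | p. p \<in> {1,2,3} \<and>
         \<not> (st ! j \<and> p \<in> {gpos (fst (w ! j)), Suc (gpos (fst (w ! j)))})}
   \<union> {((j,i),(j,Suc i)) | i. st ! j \<and> i = gpos (fst (w ! j))}
   \<union> {((Suc j,i),(Suc j,Suc i)) | i. st ! j \<and> i = gpos (fst (w ! j))}"

lemma UN_pull: "{f j p | j p. j < N \<and> Q j p} = (\<Union>j<N. {f j p | p. Q j p})"
  by blast

lemma clos_set: "{((n, p), 0, p) |p. p \<in> {1::nat, 2, 3}} = set (clos n)"
  unfolding clos_def by auto

lemma brd_edges_Lj: "brd_edges w st = (\<Union>j<length w. Lj w st j) \<union> set (clos (length w))"
  unfolding brd_edges_def Lj_def UN_pull clos_set UN_Un_distrib ..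

lemma Lj_eq: "Lj w st j = set (layerL w st j)"
proof (cases "st ! j")
  case True
  show ?thesis
  proof (cases "fst (w ! j)")
    case X1
    have "{((j, p), Suc j, p) |p. p \<in> {1::nat, 2, 3} \<and> \<not> (st ! j \<and> p \<in> {1, 2})} = {((j,3),(Suc j,3))}"
      using True by auto
    then show ?thesis using True X1 unfolding Lj_def layerL_def Let_def by auto
  next
    case X2
    have "{((j, p), Suc j, p) |p. p \<in> {1::nat, 2, 3} \<and> \<not> (st ! j \<and> p \<in> {2, 3})} = {((j,1),(Suc j,1))}"
      using True by auto
    then show ?thesis using True X2 unfolding Lj_def layerL_def Let_def by (auto simp: numeral_eq_Suc)
  qed
next
  case False
  then show ?thesis unfolding Lj_def layerL_def Let_def by auto
qed

lemma brd_edges_eq: "brd_edges w st = pedges w st (length w) \<union> set (clos (length w))"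
  unfolding brd_edges_Lj pedges_def Lj_eq ..




definition lay :: "bool \<Rightarrow> brd_gen \<Rightarrow> nat \<Rightarrow> ((nat \<times> nat) \<times> (nat \<times> nat)) list" where
  "lay b g j = (if b then [((j, gpos g), (j, Suc (gpos g))), ((Suc j, gpos g), (Suc j, Suc (gpos g))), ((j, gq g), (Suc j, gq g))]
     else [((j,1),(Suc j,1)), ((j,2),(Suc j,2)), ((j,3),(Suc j,3))])"

definition L0 :: "tl \<Rightarrow> nat \<Rightarrow> nat \<times> nat \<Rightarrow> nat" where
  "L0 D n x = (if fst x = Suc n then 10 + snd x else lab D n x)"

definition stepD :: "bool \<Rightarrow> brd_gen \<Rightarrow> tl \<Rightarrow> tl \<times> nat" where
  "stepD b g D = (if b then tmul D g else (D, 0))"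

lemma step_check:
  assumes "D \<noteq> TI \<longrightarrow> n \<noteq> 0"
  shows "(\<forall>x\<in>Bn (Suc n). \<forall>y\<in>Bn (Suc n).
      (fst (addE (lay b g n) (L0 D n)) x = fst (addE (lay b g n) (L0 D n)) y) =
      (lab (fst (stepD b g D)) (Suc n) x = lab (fst (stepD b g D)) (Suc n) y))
    \<and> snd (addE (lay b g n) (L0 D n)) + snd (stepD b g D) = 3"
  using assms
  by (cases b; cases g; cases D; cases "n = 0")
     (simp_all add: lay_def L0_def lab_def Bn_def stepD_def)




lemma clos_check: "D \<noteq> TI \<longrightarrow> n \<noteq> 0 \<Longrightarrow> snd (addE (clos n) (lab D n)) + tcl D = 3"
  by (cases D; cases "n = 0") (simp_all add: clos_def lab_def)

lemma layerL_lay: "layerL w st j = lay (st ! j) (fst (w ! j)) j"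
  unfolding layerL_def lay_def Let_def by simp

lemma dstate_Suc: "dstate w st (Suc n) =
   (fst (stepD (st ! n) (fst (w ! n)) (fst (dstate w st n))),
    snd (dstate w st n) + snd (stepD (st ! n) (fst (w ! n)) (fst (dstate w st n))))"
  by (simp add: stepD_def split: prod.splits)

lemma pedges_Suc: "pedges w st (Suc n) = pedges w st n \<union> set (layerL w st n)"
  unfolding pedges_def lessThan_Suc by auto

lemma lay_V: "set (lay b g n) \<subseteq> Vn (Suc n) \<times> Vn (Suc n)"
  by (cases b; cases g) (auto simp: lay_def Vn_def)

lemma pedges_V: "pedges w st n \<subseteq> Vn n \<times> Vn n"
proof (induction n)
  case 0 then show ?case by (simp add: pedges_def)
next
  case (Suc n)
  have "Vn n \<subseteq> Vn (Suc n)" by (auto simp: Vn_def)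
  then show ?case using Suc lay_V[of "st!n" "fst (w!n)" n] unfolding pedges_Suc layerL_lay by blast
qed

lemma Sy_V: "E \<subseteq> V \<times> V \<Longrightarrow> Sy E \<subseteq> V \<times> V" unfolding Sy_def by auto
lemma Sy_sym: "sym (Sy E)" unfolding Sy_def by (auto simp: sym_def)

lemma fin_Vn: "finite (Vn n)" unfolding Vn_def by simp

lemma invariant:
  "card (Vn n // (Sy (pedges w st n))\<^sup>*) = snd (dstate w st n) + 3 \<and>
   rep (Bn n) ((Sy (pedges w st n))\<^sup>*) (lab (fst (dstate w st n)) n) \<and>
   (fst (dstate w st n) \<noteq> TI \<longrightarrow> n \<noteq> 0)"
proof (induction n)
  case 0
  have "Vn 0 // Id = (\<lambda>x. {x}) ` Vn 0" unfolding quotient_def by auto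
  then have "card (Vn 0 // Id) = 3" by (simp add: Vn_def card_image)
  moreover have "rep (Bn 0) Id (lab TI 0)" by (auto simp: rep_def Bn_def lab_def)
  ultimately show ?case by (simp add: pedges_def Sy_def)
next
  case (Suc n)
  define D where "D = fst (dstate w st n)"
  define m where "m = snd (dstate w st n)"
  define S where "S = Sy (pedges w st n)"
  define es where "es = lay (st ! n) (fst (w ! n)) n"
  have IH: "card (Vn n // S\<^sup>*) = m + 3" "rep (Bn n) (S\<^sup>*) (lab D n)" "D \<noteq> TI \<longrightarrow> n \<noteq> 0"
    using Suc.IH unfolding D_def m_def S_def by auto
  have SV: "S \<subseteq> Vn n \<times> Vn n" unfolding S_def by (rule Sy_V[OF pedges_V])
  have Vs: "Vn (Suc n) = insert (Suc n, 1) (insert (Suc n, 2) (insert (Suc n, 3) (Vn n)))"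
    by (auto simp: Vn_def)
  have SV': "S \<subseteq> Vn (Suc n) \<times> Vn (Suc n)" using SV by (auto simp: Vn_def)
  have c1: "card (Vn (Suc n) // S\<^sup>*) = m + 6"
  proof -
    have f: "finite (Vn n)" by (rule fin_Vn)
    have sub: "S \<subseteq> V \<times> V \<Longrightarrow> V \<subseteq> W \<Longrightarrow> S \<subseteq> W \<times> W" for V W by blast
    have n1: "(Suc n, p) \<notin> Vn n" for p by (simp add: Vn_def)
    have a: "card (insert (Suc n, 3) (Vn n) // S\<^sup>*) = Suc (card (Vn n // S\<^sup>*))"
      by (rule card_quot_insert_vertex[OF f SV n1])
    have b: "card (insert (Suc n, 2) (insert (Suc n, 3) (Vn n)) // S\<^sup>*) = Suc (card (insert (Suc n, 3) (Vn n) // S\<^sup>*))"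
      by (rule card_quot_insert_vertex) (use f n1 in simp, rule sub[OF SV], blast, use n1 in simp)
    have c: "card (insert (Suc n, 1) (insert (Suc n, 2) (insert (Suc n, 3) (Vn n))) // S\<^sup>*) = Suc (card (insert (Suc n, 2) (insert (Suc n, 3) (Vn n)) // S\<^sup>*))"
      by (rule card_quot_insert_vertex) (use f n1 in simp, rule sub[OF SV], blast, use n1 in simp)
    show ?thesis using a b c IH(1) unfolding Vs by simp
  qed
  define P where "P = Bn n \<union> {(Suc n,1),(Suc n,2),(Suc n,3)}"
  have PV: "P \<subseteq> Vn (Suc n)" unfolding P_def Bn_def Vn_def by auto
  have labsmall: "lab D n x < 10" for x
    by (cases D) (auto simp: lab_def)
  have rep0: "rep P (S\<^sup>*) (L0 D n)"
    unfolding rep_def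
  proof (intro ballI)
    fix x y assume xP: "x \<in> P" and yP: "y \<in> P"
    show "((x,y) \<in> S\<^sup>*) = (L0 D n x = L0 D n y)"
    proof (cases "fst x = Suc n \<or> fst y = Suc n")
      case True
      then have "x \<notin> Vn n \<or> y \<notin> Vn n" by (auto simp: Vn_def)
      then have "((x,y) \<in> S\<^sup>*) = (x = y)" using rt_outside[OF SV, of x y] rt_outside[OF SV, of y x] by auto
      also have "\<dots> = (L0 D n x = L0 D n y)"
        using True xP yP labsmall[of x] labsmall[of y] unfolding P_def Bn_def L0_def
        by (auto simp: prod_eq_iff)
      finally show ?thesis .
    next
      case False
      then have "x \<in> Bn n" "y \<in> Bn n" using xP yP unfolding P_def by auto
      then show ?thesis using IH(2) False unfolding rep_def L0_def by auto
    qed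
  qed
  have esP: "set es \<subseteq> P \<times> P" unfolding es_def P_def Bn_def
    by (cases "st ! n"; cases "fst (w ! n)") (auto simp: lay_def)
  have main: "rep P ((S \<union> set es \<union> (set es)\<inverse>)\<^sup>*) (fst (addE es (L0 D n))) \<and>
         card (Vn (Suc n) // S\<^sup>*) = card (Vn (Suc n) // (S \<union> set es \<union> (set es)\<inverse>)\<^sup>*) + snd (addE es (L0 D n))"
    by (rule addE_lemma[OF fin_Vn SV' _ PV esP rep0]) (simp add: S_def Sy_sym)
  have S2: "Sy (pedges w st (Suc n)) = S \<union> set es \<union> (set es)\<inverse>"
    unfolding S_def es_def pedges_Suc layerL_lay Sy_def by auto
  have ds: "dstate w st (Suc n) = (fst (stepD (st ! n) (fst (w ! n)) D), m + snd (stepD (st ! n) (fst (w ! n)) D))"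
    unfolding dstate_Suc D_def m_def ..
  have chk: "(\<forall>x\<in>Bn (Suc n). \<forall>y\<in>Bn (Suc n).
      (fst (addE es (L0 D n)) x = fst (addE es (L0 D n)) y) =
      (lab (fst (stepD (st ! n) (fst (w ! n)) D)) (Suc n) x = lab (fst (stepD (st ! n) (fst (w ! n)) D)) (Suc n) y))
    \<and> snd (addE es (L0 D n)) + snd (stepD (st ! n) (fst (w ! n)) D) = 3"
    unfolding es_def by (rule step_check[OF IH(3)])
  have BP: "Bn (Suc n) \<subseteq> P" unfolding P_def Bn_def by auto
  show ?case
  proof (intro conjI)
    show "card (Vn (Suc n) // (Sy (pedges w st (Suc n)))\<^sup>*) = snd (dstate w st (Suc n)) + 3"
      using main chk c1 unfolding S2 ds by simp
    show "rep (Bn (Suc n)) ((Sy (pedges w st (Suc n)))\<^sup>*) (lab (fst (dstate w st (Suc n))) (Suc n))"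
      unfolding rep_def S2 ds fst_conv
    proof (intro ballI)
      fix x y assume x: "x \<in> Bn (Suc n)" and y: "y \<in> Bn (Suc n)"
      have xy: "x \<in> P" "y \<in> P" using BP x y by auto
      have "((x,y) \<in> (S \<union> set es \<union> (set es)\<inverse>)\<^sup>*) = (fst (addE es (L0 D n)) x = fst (addE es (L0 D n)) y)"
        using main xy unfolding rep_def by blast
      also have "\<dots> = (lab (fst (stepD (st ! n) (fst (w ! n)) D)) (Suc n) x = lab (fst (stepD (st ! n) (fst (w ! n)) D)) (Suc n) y)"
        using chk x y by blast
      finally show "((x,y) \<in> (S \<union> set es \<union> (set es)\<inverse>)\<^sup>*) = (lab (fst (stepD (st ! n) (fst (w ! n)) D)) (Suc n) x = lab (fst (stepD (st ! n) (fst (w ! n)) D)) (Suc n) y)" .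
    qed
    show "fst (dstate w st (Suc n)) \<noteq> TI \<longrightarrow> Suc n \<noteq> 0" by simp
  qed
qed

lemma loops_eq: "brd_loops w st = snd (dstate w st (length w)) + tcl (fst (dstate w st (length w)))"
proof -
  define n where "n = length w"
  define D where "D = fst (dstate w st n)"
  define m where "m = snd (dstate w st n)"
  define S where "S = Sy (pedges w st n)"
  have IH: "card (Vn n // S\<^sup>*) = m + 3" "rep (Bn n) (S\<^sup>*) (lab D n)" "D \<noteq> TI \<longrightarrow> n \<noteq> 0"
    using invariant[of n w st] unfolding D_def m_def S_def by auto
  have SV: "S \<subseteq> Vn n \<times> Vn n" unfolding S_def by (rule Sy_V[OF pedges_V])
  have BV: "Bn n \<subseteq> Vn n" unfolding Bn_def Vn_def by auto
  have cP: "set (clos n) \<subseteq> Bn n \<times> Bn n" unfolding clos_def Bn_def by auto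
  have main: "card (Vn n // S\<^sup>*) = card (Vn n // (S \<union> set (clos n) \<union> (set (clos n))\<inverse>)\<^sup>*) + snd (addE (clos n) (lab D n))"
    using addE_lemma[OF fin_Vn SV _ BV cP IH(2)] by (simp add: S_def Sy_sym)
  have e: "Sy (brd_edges w st) = S \<union> set (clos n) \<union> (set (clos n))\<inverse>"
    unfolding brd_edges_eq S_def n_def Sy_def by auto
  have e': "brd_edges w st \<union> (brd_edges w st)\<inverse> = S \<union> set (clos n) \<union> (set (clos n))\<inverse>"
    using e by (simp only: Sy_def)
  have "brd_loops w st = card (Vn n // (S \<union> set (clos n) \<union> (set (clos n))\<inverse>)\<^sup>*)"
    unfolding brd_loops_def e' brd_vertices_def Vn_def n_def ..
  then show ?thesis using main IH(1) clos_check[OF IH(3)] unfolding D_def m_def n_def by simp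
qed




fun tword :: "tl \<Rightarrow> brd_gen list" where
  "tword TI = []" | "tword T1 = [X1]" | "tword T2 = [X2]" | "tword T12 = [X1,X2]" | "tword T21 = [X2,X1]"

fun tmulw :: "tl \<Rightarrow> brd_gen list \<Rightarrow> tl \<times> nat" where
  "tmulw D [] = (D, 0)"
| "tmulw D (g#gs) = (let r1 = tmul D g; r2 = tmulw (fst r1) gs in (fst r2, snd r1 + snd r2))"

definition trl :: "tl \<Rightarrow> tl \<Rightarrow> nat" where
  "trl D X = (let r = tmulw D (tword X) in snd r + tcl (fst r) - 1)"

fun gen :: "brd_gen \<Rightarrow> tl" where "gen X1 = T1" | "gen X2 = T2"

definition lmul :: "brd_gen \<Rightarrow> tl \<Rightarrow> tl \<times> nat" where
  "lmul g X = tmulw (gen g) (tword X)"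

lemma table: "snd (tmul D g) + trl (fst (tmul D g)) X = snd (lmul g X) + trl D (fst (lmul g X))"
  by (cases D; cases g; cases X) (simp_all add: trl_def lmul_def)

definition Cr :: "nat \<Rightarrow> tl \<Rightarrow> 'a::comm_ring_1 \<Rightarrow> 'a \<Rightarrow> 'a \<Rightarrow> 'a" where
  "Cr r X s i A = (case X of
     TI \<Rightarrow> [A*(i^2+s^2) + 2*A^2, -A*(i+s^3) + A^2*(s^3-s), A*(1+s^4) - A^2*s^4,
            -A*(s+s^5), A*(s^2+s^6) - A^2*s^8, -A*(s^3+s^7) + A^2*(s^9-s^11)] ! r
   | T1 \<Rightarrow> [A^2*(-i-s), A^2*(-(s^2)-s^4), A^2*s^3, A^2*s^6, A^2*s^9, A^2*s^12] ! r
   | T2 \<Rightarrow> [A^2*(-i-s), A^2, A^2*s^3, A^2*s^6, A^2*s^9, -(A^2)*(s^8+s^10)] ! r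
   | T12 \<Rightarrow> [A^2, A^2*s^3, A^2*(-(s^2)-s^4), -(A^2)*(s^5+s^7), A^2*s^6, A^2*s^9] ! r
   | T21 \<Rightarrow> [A^2, A^2*s^3, A^2*s^6, -(A^2)*(s^5+s^7), -(A^2)*(s^8+s^10), A^2*s^9] ! r)"

definition stp :: "brd_gen \<Rightarrow> (tl \<Rightarrow> 'a::comm_ring_1) \<Rightarrow> 'a \<Rightarrow> 'a \<Rightarrow> tl \<Rightarrow> 'a" where
  "stp g F s i X = - s * F X - s^2 * (-(s+i))^(snd (lmul g X)) * F (fst (lmul g X))"

lemma Cr_step0:
  fixes s i A :: "'a::idom"
  assumes "s * i = 1"
  shows "Cr 1 X s i A = stp X1 (\<lambda>Y. Cr 0 Y s i A) s i X"
  using assms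
  by (induct X; simp add: Cr_def stp_def lmul_def numeral_eq_Suc; (simp add: algebra_simps; fail)?; algebra)

lemma Cr_step1:
  fixes s i A :: "'a::idom"
  assumes "s * i = 1"
  shows "Cr 2 X s i A = stp X2 (\<lambda>Y. Cr 1 Y s i A) s i X"
  using assms
  by (induct X; simp add: Cr_def stp_def lmul_def numeral_eq_Suc; (simp add: algebra_simps; fail)?; algebra)

lemma Cr_step2:
  fixes s i A :: "'a::idom"
  assumes "s * i = 1"
  shows "Cr 3 X s i A = stp X1 (\<lambda>Y. Cr 2 Y s i A) s i X"
  using assms
  by (induct X; simp add: Cr_def stp_def lmul_def numeral_eq_Suc; (simp add: algebra_simps; fail)?; algebra)

lemma Cr_step3:
  fixes s i A :: "'a::idom"
  assumes "s * i = 1"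
  shows "Cr 4 X s i A = stp X2 (\<lambda>Y. Cr 3 Y s i A) s i X"
  using assms
  by (induct X; simp add: Cr_def stp_def lmul_def numeral_eq_Suc; (simp add: algebra_simps; fail)?; algebra)

lemma Cr_step4:
  fixes s i A :: "'a::idom"
  assumes "s * i = 1"
  shows "Cr 5 X s i A = stp X1 (\<lambda>Y. Cr 4 Y s i A) s i X"
  using assms
  by (induct X; simp add: Cr_def stp_def lmul_def numeral_eq_Suc; (simp add: algebra_simps; fail)?; algebra)

lemma Cr_step5:
  fixes s i A :: "'a::idom"
  assumes "s * i = 1"
  shows "Cr 0 X s i (A * s^6) = stp X2 (\<lambda>Y. Cr 5 Y s i A) s i X"
  using assms
  by (induct X; simp add: Cr_def stp_def lmul_def numeral_eq_Suc; (simp add: algebra_simps; fail)?; algebra)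




lemma XiX: "fls_X * (fls_X_inv :: int fls) = 1"
  by (simp add: fls_X_inv_times_conv_shift fls_X_conv_shift_1)

definition Wf :: "brd_word \<Rightarrow> nat \<Rightarrow> tl \<Rightarrow> int fls" where
  "Wf w n X = (\<Sum>st\<in>{st::bool list. length st = n}.
     (\<Prod>j<n. brd_coef (w!j) (st!j)) * loop_val ^ (snd (dstate w st n) + trl (fst (dstate w st n)) X))"

lemma tcl_pos: "tcl D \<ge> 1" by (cases D) auto

lemma V3_Wf: "V3 w = Wf w (length w) TI"
  unfolding V3_def Wf_def
proof (rule sum.cong[OF refl])
  fix st
  have "brd_loops w st - 1 = snd (dstate w st (length w)) + trl (fst (dstate w st (length w))) TI"
    unfolding loops_eq trl_def using tcl_pos[of "fst (dstate w st (length w))"] by simp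
  then show "(\<Prod>j<length w. brd_coef (w ! j) (st ! j)) * loop_val ^ (brd_loops w st - 1) =
    (\<Prod>j<length w. brd_coef (w ! j) (st ! j)) * loop_val ^ (snd (dstate w st (length w)) + trl (fst (dstate w st (length w))) TI)"
    by simp
qed

lemma dstate_cong: "(\<forall>j<n. st!j = st'!j) \<Longrightarrow> (\<forall>j<n. w!j = w'!j) \<Longrightarrow> dstate w st n = dstate w' st' n"
proof (induction n)
  case 0 then show ?case by simp
next
  case (Suc n)
  have e1: "dstate w st n = dstate w' st' n" using Suc by auto
  have e2: "st!n = st'!n" "w!n = w'!n" using Suc.prems by auto
  show ?case by (simp only: dstate.simps e1 e2)
qed

lemma sum_lists_Suc:
  "(\<Sum>st\<in>{st::bool list. length st = Suc n}. f st) = (\<Sum>xs\<in>{xs. length xs = n}. f (xs@[False]) + f (xs@[True]))"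
proof -
  define A where "A = {xs::bool list. length xs = n}"
  have "finite {xs::bool list. set xs \<subseteq> UNIV \<and> length xs = n}" by (rule finite_lists_length_eq) simp
  then have fA: "finite A" unfolding A_def by simp
  have e: "{st::bool list. length st = Suc n} = (\<lambda>xs. xs@[False]) ` A \<union> (\<lambda>xs. xs@[True]) ` A"
  proof (rule set_eqI, rule iffI)
    fix st :: "bool list" assume "st \<in> {st. length st = Suc n}"
    then obtain y ys where st: "st = ys @ [y]" "length ys = n" by (auto simp: length_Suc_conv_rev)
    then show "st \<in> (\<lambda>xs. xs@[False]) ` A \<union> (\<lambda>xs. xs@[True]) ` A"
      unfolding A_def by (cases y) auto
  qed (auto simp: A_def)
  have d: "(\<lambda>xs. xs@[False]) ` A \<inter> (\<lambda>xs. xs@[True]) ` A = {}" by auto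
  have i1: "inj_on (\<lambda>xs. xs@[b]) A" for b by (auto simp: inj_on_def)
  show ?thesis
    unfolding e A_def[symmetric]
    by (subst sum.union_disjoint) (use fA d in \<open>auto simp: sum.reindex[OF i1] sum.distrib\<close>)
qed

lemma Wf_Suc:
  "Wf w (Suc n) X = brd_coef (w!n) False * Wf w n X +
     brd_coef (w!n) True * loop_val ^ snd (lmul (fst (w!n)) X) * Wf w n (fst (lmul (fst (w!n)) X))"
proof -
  define g where "g = fst (w!n)"
  define k where "k = snd (lmul g X)"
  define Y where "Y = fst (lmul g X)"
  define G where "G = (\<lambda>Z xs. (\<Prod>j<n. brd_coef (w!j) (xs!j)) * loop_val ^ (snd (dstate w xs n) + trl (fst (dstate w xs n)) Z))"
  define f where "f = (\<lambda>st. (\<Prod>j<Suc n. brd_coef (w!j) (st!j)) * loop_val ^ (snd (dstate w st (Suc n)) + trl (fst (dstate w st (Suc n))) X))"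
  have fx: "f (xs@[False]) + f (xs@[True]) = brd_coef (w!n) False * G X xs + brd_coef (w!n) True * loop_val ^ k * G Y xs"
    if "length xs = n" for xs
  proof -
    have ds: "dstate w (xs@[b]) n = dstate w xs n" for b
      by (rule dstate_cong) (use that in \<open>auto simp: nth_append\<close>)
    have pr: "(\<Prod>j<Suc n. brd_coef (w!j) ((xs@[b])!j)) = (\<Prod>j<n. brd_coef (w!j) (xs!j)) * brd_coef (w!n) b" for b
      using that by (simp add: nth_append)
    have nb: "(xs@[b]) ! n = b" for b using that nth_append_length[of xs b] by simp
    have tb: "snd (tmul D g) + trl (fst (tmul D g)) X = k + trl D Y" for D
      unfolding k_def Y_def by (rule table)
    have "f (xs@[False]) = brd_coef (w!n) False * G X xs"
      unfolding f_def G_def dstate_Suc ds pr nb by (simp add: stepD_def)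
    moreover have "f (xs@[True]) = brd_coef (w!n) True * loop_val ^ k * G Y xs"
      unfolding f_def G_def dstate_Suc ds pr nb g_def[symmetric]
      by (simp add: stepD_def add.assoc tb power_add algebra_simps)
    ultimately show ?thesis by simp
  qed
  have "Wf w (Suc n) X = (\<Sum>xs\<in>{xs. length xs = n}. f (xs@[False]) + f (xs@[True]))"
    unfolding Wf_def f_def by (rule sum_lists_Suc)
  also have "\<dots> = (\<Sum>xs\<in>{xs. length xs = n}. brd_coef (w!n) False * G X xs + brd_coef (w!n) True * loop_val ^ k * G Y xs)"
    by (rule sum.cong) (auto simp: fx)
  also have "\<dots> = brd_coef (w!n) False * Wf w n X + brd_coef (w!n) True * loop_val ^ k * Wf w n Y"
    unfolding Wf_def G_def by (simp add: sum.distrib sum_distrib_left)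
  finally show ?thesis unfolding k_def Y_def g_def .
qed

lemma Wf_cong: "(\<forall>j<n. w!j = w'!j) \<Longrightarrow> Wf w n X = Wf w' n X"
  unfolding Wf_def
  by (rule sum.cong[OF refl]) (auto intro!: prod.cong arg_cong2[where f="(*)"] arg_cong2[where f="(^)"]
        simp: dstate_cong[of n st st w w' for st])

lemma alpha_len: "length (alpha n) = n" by (simp add: alpha_def)
lemma alpha_nth: "j < n \<Longrightarrow> alpha n ! j = (if even j then X1 else X2, True)" by (simp add: alpha_def)

definition Wa :: "nat \<Rightarrow> tl \<Rightarrow> int fls" where "Wa n X = Wf (alpha n) n X"

lemma Wa_Suc: "Wa (Suc n) X = stp (if even n then X1 else X2) (Wa n) fls_X fls_X_inv X"
proof -
  have c: "Wf (alpha (Suc n)) n Y = Wa n Y" for Y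
    unfolding Wa_def by (rule Wf_cong) (simp add: alpha_nth)
  show ?thesis
    unfolding Wa_def Wf_Suc c[unfolded Wa_def] stp_def
    by (simp add: alpha_nth brd_coef_def loop_val_def)
qed

lemma Wa_0: "Wa 0 X = loop_val ^ trl TI X"
proof -
  have "{st::bool list. length st = 0} = {[]}" by auto
  then show ?thesis unfolding Wa_def Wf_def by simp
qed

lemma VD_Wa: "V_Delta n = Wa n TI"
  unfolding V_Delta_def V3_Wf Wa_def alpha_len ..




abbreviation "sX \<equiv> (fls_X :: int fls)"
abbreviation "iX \<equiv> (fls_X_inv :: int fls)"

lemma Wa_stepF: "Wa n = F \<Longrightarrow> Wa (Suc n) X = stp (if even n then X1 else X2) F sX iX X"
  using Wa_Suc by simp

lemma Wa_chain:
  assumes w0: "Wa n = (\<lambda>Y. Cr 0 Y sX iX A)" and ev: "even n"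
  shows "Wa (Suc n) = (\<lambda>Y. Cr 1 Y sX iX A)"
    "Wa (Suc (Suc n)) = (\<lambda>Y. Cr 2 Y sX iX A)"
    "Wa (Suc (Suc (Suc n))) = (\<lambda>Y. Cr 3 Y sX iX A)"
    "Wa (Suc (Suc (Suc (Suc n)))) = (\<lambda>Y. Cr 4 Y sX iX A)"
    "Wa (Suc (Suc (Suc (Suc (Suc n))))) = (\<lambda>Y. Cr 5 Y sX iX A)"
    "Wa (Suc (Suc (Suc (Suc (Suc (Suc n)))))) = (\<lambda>Y. Cr 0 Y sX iX (A * sX^6))"
proof -
  show w1: "Wa (Suc n) = (\<lambda>Y. Cr 1 Y sX iX A)"
    by (rule ext) (simp only: Wa_stepF[OF w0] ev even_Suc not_True_eq_False not_False_eq_True if_True if_False Cr_step0[OF XiX])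
  show w2: "Wa (Suc (Suc n)) = (\<lambda>Y. Cr 2 Y sX iX A)"
    by (rule ext) (simp only: Wa_stepF[OF w1] ev even_Suc not_True_eq_False not_False_eq_True if_True if_False Cr_step1[OF XiX])
  show w3: "Wa (Suc (Suc (Suc n))) = (\<lambda>Y. Cr 3 Y sX iX A)"
    by (rule ext) (simp only: Wa_stepF[OF w2] ev even_Suc not_True_eq_False not_False_eq_True if_True if_False Cr_step2[OF XiX])
  show w4: "Wa (Suc (Suc (Suc (Suc n)))) = (\<lambda>Y. Cr 4 Y sX iX A)"
    by (rule ext) (simp only: Wa_stepF[OF w3] ev even_Suc not_True_eq_False not_False_eq_True if_True if_False Cr_step3[OF XiX])
  show w5: "Wa (Suc (Suc (Suc (Suc (Suc n))))) = (\<lambda>Y. Cr 5 Y sX iX A)"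
    by (rule ext) (simp only: Wa_stepF[OF w4] ev even_Suc not_True_eq_False not_False_eq_True if_True if_False Cr_step4[OF XiX])
  show "Wa (Suc (Suc (Suc (Suc (Suc (Suc n)))))) = (\<lambda>Y. Cr 0 Y sX iX (A * sX^6))"
    by (rule ext) (simp only: Wa_stepF[OF w5] ev even_Suc not_True_eq_False not_False_eq_True if_True if_False Cr_step5[OF XiX])
qed

lemma Wa_base: "Wa 0 = (\<lambda>Y. Cr 0 Y sX iX 1)"
proof (rule ext)
  fix X
  show "Wa 0 X = Cr 0 X sX iX 1" unfolding Wa_0 using XiX
    by (induct X; simp add: Cr_def trl_def loop_val_def; (simp add: algebra_simps; fail)?; algebra)
qed

lemma Wa_block0: "Wa (6*j) = (\<lambda>Y. Cr 0 Y sX iX (sX^(6*j)))"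
proof (induction j)
  case 0 show ?case using Wa_base by simp
next
  case (Suc j)
  have e: "6 * Suc j = Suc (Suc (Suc (Suc (Suc (Suc (6*j))))))" by simp
  have pw: "sX^(6 * Suc j) = sX^(6*j) * sX^6" by (simp add: power_add)
  show ?case unfolding pw unfolding e by (rule Wa_chain(6)[OF Suc.IH]) simp
qed

lemma Wa_block: "r < 6 \<Longrightarrow> V_Delta (6*j+r) = Cr r TI sX iX (sX^(6*j))"
proof -
  assume r: "r < 6"
  note c = Wa_chain[OF Wa_block0[of j], simplified]
  have "r = 0 \<or> r = 1 \<or> r = 2 \<or> r = 3 \<or> r = 4 \<or> r = 5" using r by auto
  then show ?thesis unfolding VD_Wa
    using c Wa_block0[of j] by (auto simp: numeral_eq_Suc)
qed

lemma R1a: "(s::'a::idom) * i = 1 \<Longrightarrow> Cr 3 TI s i A = (s^3 - s) * Cr 2 TI s i A + s^4 * Cr 1 TI s i A"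
  by (simp add: Cr_def numeral_eq_Suc; (simp add: algebra_simps; fail)?; algebra)
lemma R1b: "(s::'a::idom) * i = 1 \<Longrightarrow> Cr 5 TI s i A = (s^3 - s) * Cr 4 TI s i A + s^4 * Cr 3 TI s i A"
  by (simp add: Cr_def numeral_eq_Suc; (simp add: algebra_simps; fail)?; algebra)
lemma R1c: "(s::'a::idom) * i = 1 \<Longrightarrow> Cr 1 TI s i (A*s^6) = (s^3 - s) * Cr 0 TI s i (A*s^6) + s^4 * Cr 5 TI s i A"
  by (simp add: Cr_def numeral_eq_Suc; (simp add: algebra_simps; fail)?; algebra)
lemma R2: "(s::'a::idom) * i = 1 \<Longrightarrow> Cr 4 TI s i A = (s^3 - s) * Cr 3 TI s i A + s^4 * Cr 2 TI s i A"
  by (simp add: Cr_def numeral_eq_Suc; (simp add: algebra_simps; fail)?; algebra)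
lemma R3: "(s::'a::idom) * i = 1 \<Longrightarrow> Cr 2 TI s i (A*s^6) = (s^3 - s) * Cr 1 TI s i (A*s^6)
   + (s^7 - s^5) * Cr 5 TI s i A + s^8 * Cr 4 TI s i A"
  by (simp add: Cr_def numeral_eq_Suc; (simp add: algebra_simps; fail)?; algebra)
lemma R4: "(s::'a::idom) * i = 1 \<Longrightarrow> Cr 0 TI s i (A*s^6) = (s^3 - s) *
   (Cr 5 TI s i A + s^4 * Cr 3 TI s i A + s^8 * Cr 1 TI s i A) + s^12 * Cr 0 TI s i A"
  by (simp add: Cr_def numeral_eq_Suc; (simp add: algebra_simps; fail)?; algebra)

lemma VB: "V_Delta (6*j+r) = Cr r TI sX iX (sX^(6*j))" if "r < 6" using Wa_block that by blast

lemma VB': "V_Delta (6*(j+1)+r) = Cr r TI sX iX (sX^(6*j) * sX^6)" if "r < 6"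
proof -
  have "sX^(6*(j+1)) = sX^(6*j) * sX^6" by (simp add: power_add)
  then show ?thesis using VB[OF that, of "j+1"] by simp
qed

lemma VB0: "V_Delta (6*j+0) = Cr 0 TI sX iX (sX^(6*j))" by (rule VB) simp
lemma VBp0: "V_Delta (6*(j+1)+0) = Cr 0 TI sX iX (sX^(6*j) * sX^6)" by (rule VB') simp
lemma VB1: "V_Delta (6*j+1) = Cr 1 TI sX iX (sX^(6*j))" by (rule VB) simp
lemma VBp1: "V_Delta (6*(j+1)+1) = Cr 1 TI sX iX (sX^(6*j) * sX^6)" by (rule VB') simp
lemma VB2: "V_Delta (6*j+2) = Cr 2 TI sX iX (sX^(6*j))" by (rule VB) simp
lemma VBp2: "V_Delta (6*(j+1)+2) = Cr 2 TI sX iX (sX^(6*j) * sX^6)" by (rule VB') simp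
lemma VB3: "V_Delta (6*j+3) = Cr 3 TI sX iX (sX^(6*j))" by (rule VB) simp
lemma VBp3: "V_Delta (6*(j+1)+3) = Cr 3 TI sX iX (sX^(6*j) * sX^6)" by (rule VB') simp
lemma VB4: "V_Delta (6*j+4) = Cr 4 TI sX iX (sX^(6*j))" by (rule VB) simp
lemma VBp4: "V_Delta (6*(j+1)+4) = Cr 4 TI sX iX (sX^(6*j) * sX^6)" by (rule VB') simp
lemma VB5: "V_Delta (6*j+5) = Cr 5 TI sX iX (sX^(6*j))" by (rule VB) simp
lemma VBp5: "V_Delta (6*(j+1)+5) = Cr 5 TI sX iX (sX^(6*j) * sX^6)" by (rule VB') simp

theorem proposition4p6:
  shows "(\<forall>k::nat. k \<ge> 1 \<longrightarrow>
            V_Delta (2*k+1) = (fls_X ^ 3 - fls_X) * V_Delta (2*k) + fls_X ^ 4 * V_Delta (2*k-1))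
       \<and> (\<forall>k::nat.
            V_Delta (6*k+4) = (fls_X ^ 3 - fls_X) * V_Delta (6*k+3) + fls_X ^ 4 * V_Delta (6*k+2))
       \<and> (\<forall>k::nat. k \<ge> 1 \<longrightarrow>
            V_Delta (6*k+2) = (fls_X ^ 3 - fls_X) * V_Delta (6*k+1)
              + (fls_X ^ 7 - fls_X ^ 5) * V_Delta (6*k-1) + fls_X ^ 8 * V_Delta (6*k-2))
       \<and> (\<forall>k::nat. k \<ge> 1 \<longrightarrow>
            V_Delta (6*k) = (fls_X ^ 3 - fls_X) *
              (V_Delta (6*k-1) + fls_X ^ 4 * V_Delta (6*k-3) + fls_X ^ 8 * V_Delta (6*k-5))
              + fls_X ^ 12 * V_Delta (6*k-6))"
proof (intro conjI allI impI)
  fix k :: nat assume k: "k \<ge> 1"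
  define j where "j = k div 3"
  define r where "r = k mod 3"
  have kj: "k = 3*j + r" unfolding j_def r_def by simp
  have "r = 0 \<or> r = 1 \<or> r = 2" unfolding r_def by auto
  then show "V_Delta (2*k+1) = (fls_X ^ 3 - fls_X) * V_Delta (2*k) + fls_X ^ 4 * V_Delta (2*k-1)"
  proof (elim disjE)
    assume r0: "r = 0"
    then obtain j' where j': "j = j' + 1" using k kj by (cases j) auto
    have e: "2*k+1 = 6*(j'+1)+1" "2*k = 6*(j'+1)+0" "2*k-1 = 6*j'+5" using kj r0 j' by auto
    have a: "V_Delta (2*k+1) = Cr 1 TI sX iX (sX^(6*j')*sX^6)" by (subst e(1), rule VB') simp
    have b: "V_Delta (2*k) = Cr 0 TI sX iX (sX^(6*j')*sX^6)" by (subst e(2), rule VB') simp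
    have c: "V_Delta (2*k-1) = Cr 5 TI sX iX (sX^(6*j'))" by (subst e(3), rule VB) simp
    show ?thesis unfolding a b c by (rule R1c[OF XiX])
  next
    assume r1: "r = 1"
    have e: "2*k+1 = 6*j+3" "2*k = 6*j+2" "2*k-1 = 6*j+1" using kj r1 by auto
    have a: "V_Delta (2*k+1) = Cr 3 TI sX iX (sX^(6*j))" by (simp only: e(1) VB3)
    have b: "V_Delta (2*k) = Cr 2 TI sX iX (sX^(6*j))" by (simp only: e(2) VB2)
    have c: "V_Delta (2*k-1) = Cr 1 TI sX iX (sX^(6*j))" by (simp only: e(3) VB1)
    show ?thesis unfolding a b c by (rule R1a[OF XiX])
  next
    assume r2: "r = 2"
    have e: "2*k+1 = 6*j+5" "2*k = 6*j+4" "2*k-1 = 6*j+3" using kj r2 by auto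
    have a: "V_Delta (2*k+1) = Cr 5 TI sX iX (sX^(6*j))" by (simp only: e(1) VB5)
    have b: "V_Delta (2*k) = Cr 4 TI sX iX (sX^(6*j))" by (simp only: e(2) VB4)
    have c: "V_Delta (2*k-1) = Cr 3 TI sX iX (sX^(6*j))" by (simp only: e(3) VB3)
    show ?thesis unfolding a b c by (rule R1b[OF XiX])
  qed
next
  fix k :: nat
  show "V_Delta (6*k+4) = (fls_X ^ 3 - fls_X) * V_Delta (6*k+3) + fls_X ^ 4 * V_Delta (6*k+2)"
    unfolding VB4 VB3 VB2 by (rule R2[OF XiX])
next
  fix k :: nat assume k: "k \<ge> 1"
  then obtain j where j: "k = j + 1" by (cases k) auto
  have e: "6*k+2 = 6*(j+1)+2" "6*k+1 = 6*(j+1)+1" "6*k-1 = 6*j+5" "6*k-2 = 6*j+4" using j by auto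
  show "V_Delta (6*k+2) = (fls_X ^ 3 - fls_X) * V_Delta (6*k+1)
              + (fls_X ^ 7 - fls_X ^ 5) * V_Delta (6*k-1) + fls_X ^ 8 * V_Delta (6*k-2)"
  proof -
    have a: "V_Delta (6*k+2) = Cr 2 TI sX iX (sX^(6*j)*sX^6)" by (simp only: e(1) VBp2)
    have b: "V_Delta (6*k+1) = Cr 1 TI sX iX (sX^(6*j)*sX^6)" by (simp only: e(2) VBp1)
    have c: "V_Delta (6*k-1) = Cr 5 TI sX iX (sX^(6*j))" by (simp only: e(3) VB5)
    have d: "V_Delta (6*k-2) = Cr 4 TI sX iX (sX^(6*j))" by (simp only: e(4) VB4)
    show ?thesis unfolding a b c d by (rule R3[OF XiX])
  qed
next
  fix k :: nat assume k: "k \<ge> 1"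
  then obtain j where j: "k = j + 1" by (cases k) auto
  have e: "6*k = 6*(j+1)+0" "6*k-1 = 6*j+5" "6*k-3 = 6*j+3" "6*k-5 = 6*j+1" "6*k-6 = 6*j+0" using j by auto
  show "V_Delta (6*k) = (fls_X ^ 3 - fls_X) *
              (V_Delta (6*k-1) + fls_X ^ 4 * V_Delta (6*k-3) + fls_X ^ 8 * V_Delta (6*k-5))
              + fls_X ^ 12 * V_Delta (6*k-6)"
  proof -
    have a: "V_Delta (6*k) = Cr 0 TI sX iX (sX^(6*j)*sX^6)" by (simp only: e(1) VBp0)
    have b: "V_Delta (6*k-1) = Cr 5 TI sX iX (sX^(6*j))" by (simp only: e(2) VB5)
    have c: "V_Delta (6*k-3) = Cr 3 TI sX iX (sX^(6*j))" by (simp only: e(3) VB3)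
    have d: "V_Delta (6*k-5) = Cr 1 TI sX iX (sX^(6*j))" by (simp only: e(4) VB1)
    have f: "V_Delta (6*k-6) = Cr 0 TI sX iX (sX^(6*j))" by (simp only: e(5) VB0)
    show ?thesis unfolding a b c d f by (rule R4[OF XiX])
  qed
qed


end
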